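(* Let $\mathbb{K}$ be a field and $n\ge2$ an integer. Let $Q=\{(2,2),(3,3),\dots,(n+2,n+2)\}$ and $P=\{(1,1)\}\cup\big(\{2,\dots,n+2\}^2\setminus Q\big)$, viewed as subsets of $\{1,\dots,n+2\}^2$. Then the CI-problem $(P,Q,n+2)$ is solvable over $\mathbb{K}$ if and only if the characteristic of $\mathbb{K}$ divides $n$.
   Context: A constrained invertibility (CI) problem is a triple $(P,Q,N)$ with $P,Q\subseteq\{1,\dots,N\}^2$; it is solvable over $\mathbb{K}$ if there is an invertible $N\times N$ matrix $A$ over $\mathbb{K}$ with $A_{i,j}=0$ for all $(i,j)\in P$ and $(A^{-1})_{i',j'}=0$ for all $(i',j')\in Q$. "Characteristic divides $n$" means $n\cdot1_{\mathbb{K}}=0$ (in particular it fails in characteristic $0$ unless... $n=0$, which is excluded). *)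

theory Defs
  imports "Jordan_Normal_Form.Matrix"
begin

text \<open>A matrix of size N is a Jordan_Normal_Form matrix in carrier_mat N N; entry (i,j)
  (1-based) is A $$ (i-1, j-1).\<close>

definition CI_solvable :: "(nat \<times> nat) set \<Rightarrow> (nat \<times> nat) set \<Rightarrow> nat \<Rightarrow> 'a::field itself \<Rightarrow> bool" where
  "CI_solvable P Q N TYPE_K \<longleftrightarrow>
     (\<exists>A B :: 'a mat. A \<in> carrier_mat N N \<and> B \<in> carrier_mat N N \<and>
        A * B = 1\<^sub>m N \<and> B * A = 1\<^sub>m N \<and>
        (\<forall>(i,j)\<in>P. A $$ (i - 1, j - 1) = 0) \<and>
        (\<forall>(i,j)\<in>Q. B $$ (i - 1, j - 1) = 0))"

definition Q7 :: "nat \<Rightarrow> (nat \<times> nat) set" where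
  "Q7 n = {(i, i) | i. i \<in> {2..n+2}}"

definition P7 :: "nat \<Rightarrow> (nat \<times> nat) set" where
  "P7 n = {(1,1)} \<union> (({2..n+2} \<times> {2..n+2}) - Q7 n)"

end

theory Submission
  imports Defs
begin

lemma sum_split0:
  fixes f :: "nat \<Rightarrow> 'a::comm_monoid_add"
  shows "sum f {0..<Suc m} = f 0 + sum f {1..<Suc m}"
  using sum.atLeast_Suc_lessThan[of 0 "Suc m" f] by simp

definition Am :: "nat \<Rightarrow> 'a::field mat" where
  "Am N = mat N N (\<lambda>(i,j). if i = 0 \<and> j = 0 then 0 else if i = 0 \<or> j = 0 then 1
            else if i = j then 1 else 0)"
definition Bm :: "nat \<Rightarrow> 'a::field mat" where
  "Bm N = mat N N (\<lambda>(i,j). if i = 0 \<and> j = 0 then -1 else if i = 0 \<or> j = 0 then 1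
            else if i = j then 0 else -1)"

lemma Am_idx: "i < N \<Longrightarrow> j < N \<Longrightarrow> (Am N :: 'a::field mat) $$ (i,j) =
   (if i = 0 \<and> j = 0 then 0 else if i = 0 \<or> j = 0 then 1 else if i = j then 1 else 0)"
  by (simp add: Am_def)
lemma Bm_idx: "i < N \<Longrightarrow> j < N \<Longrightarrow> (Bm N :: 'a::field mat) $$ (i,j) =
   (if i = 0 \<and> j = 0 then -1 else if i = 0 \<or> j = 0 then 1 else if i = j then 0 else -1)"
  by (simp add: Bm_def)

lemma Am_carrier: "Am N \<in> carrier_mat N N" by (simp add: Am_def)
lemma Bm_carrier: "Bm N \<in> carrier_mat N N" by (simp add: Bm_def)

lemma sum_delta1:
  fixes c :: "'a::field"
  assumes "j \<in> S" "finite S"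
  shows "(\<Sum>k\<in>S. if k = j then c else d) = c + of_nat (card S - 1) * d"
proof -
  have "(\<Sum>k\<in>S. if k = j then c else d) = c + (\<Sum>k\<in>S - {j}. if k = j then c else d)"
    using assms by (simp add: sum.remove)
  also have "(\<Sum>k\<in>S - {j}. if k = j then c else d) = (\<Sum>k\<in>S - {j}. d)"
    by (rule sum.cong) auto
  finally show ?thesis using assms by (simp add: card_Diff_singleton)
qed

lemma part2_AB:
  assumes n: "of_nat n = (0::'a::field)"
  shows "(Am (n+2) :: 'a mat) * Bm (n+2) = 1\<^sub>m (n+2)"
proof (rule eq_matI)
  fix i j assume i: "i < dim_row (1\<^sub>m (n+2) :: 'a mat)" and j: "j < dim_col (1\<^sub>m (n+2) :: 'a mat)"
  then have i': "i < Suc (Suc n)" and j': "j < Suc (Suc n)" by auto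
  have "(Am (n+2) * Bm (n+2)) $$ (i,j) = (\<Sum>k\<in>{0..<Suc (Suc n)}. (Am (n+2) :: 'a mat) $$ (i,k) * Bm (n+2) $$ (k,j))"
    using i j by (simp add: scalar_prod_def Am_def Bm_def)
  also have "\<dots> = Am (n+2) $$ (i,0) * (Bm (n+2) :: 'a mat) $$ (0,j) + (\<Sum>k\<in>{1..<Suc (Suc n)}. (Am (n+2) :: 'a mat) $$ (i,k) * Bm (n+2) $$ (k,j))"
    by (rule sum_split0)
  also have "\<dots> = (1\<^sub>m (n+2) :: 'a mat) $$ (i,j)"
  proof -
    have s: "(\<Sum>k\<in>{1..<Suc (Suc n)}. (Am (n+2) :: 'a mat) $$ (i,k) * Bm (n+2) $$ (k,j))
       = (\<Sum>k\<in>{1..<Suc (Suc n)}. (if i = 0 then 1 else if k = i then 1 else 0) * (if j = 0 then 1 else if k = j then 0 else -1))"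
      by (rule sum.cong) (use i' j' in \<open>auto simp: Am_idx Bm_idx\<close>)
    have c: "card {1..<Suc (Suc n)} - 1 = n" by simp
    show ?thesis
    proof (cases "i = 0")
      case True
      show ?thesis
      proof (cases "j = 0")
        case True
        then show ?thesis using \<open>i = 0\<close> s n by (simp add: Am_idx Bm_idx)
      next
        case False
        have "(\<Sum>k\<in>{1..<Suc (Suc n)}. (if k = j then 0 else -1::'a)) = 0 + of_nat n * (-1)"
          using sum_delta1[of j "{1..<Suc (Suc n)}" "0::'a" "-1"] False j' c by simp
        then show ?thesis using \<open>i = 0\<close> False s n i' j' by (simp add: Am_idx Bm_idx)
      qed
    next
      case False
      have d: "(\<Sum>k\<in>{1..<Suc (Suc n)}. (if k = i then 1 else 0::'a)) = 1"
        using False i' by (simp add: sum.delta)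
      show ?thesis
      proof (cases "j = 0")
        case True
        then show ?thesis using False s d i' j' by (simp add: Am_idx Bm_idx)
      next
        case jF: False
        have "(\<Sum>k\<in>{1..<Suc (Suc n)}. (if k = i then 1 else 0) * (if k = j then 0 else -1::'a))
             = (\<Sum>k\<in>{1..<Suc (Suc n)}. (if k = i then (if i = j then 0 else -1) else 0::'a))"
          by (rule sum.cong) auto
        also have "\<dots> = (if i = j then 0 else -1)"
          using False i' by (simp add: sum.delta)
        finally show ?thesis using False jF s i' j' by (simp add: Am_idx Bm_idx)
      qed
    qed
  qed
  finally show "(Am (n+2) * Bm (n+2)) $$ (i,j) = (1\<^sub>m (n+2) :: 'a mat) $$ (i,j)" .
qed (auto simp: Am_def Bm_def)

lemma Am_T: "transpose_mat (Am N) = Am N"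
  by (rule eq_matI) (auto simp: Am_def)
lemma Bm_T: "transpose_mat (Bm N) = Bm N"
  by (rule eq_matI) (auto simp: Bm_def)

lemma part2_BA:
  assumes n: "of_nat n = (0::'a::field)"
  shows "(Bm (n+2) :: 'a mat) * Am (n+2) = 1\<^sub>m (n+2)"
proof -
  have "transpose_mat ((Am (n+2) :: 'a mat) * Bm (n+2)) = transpose_mat (Bm (n+2)) * transpose_mat (Am (n+2))"
    by (rule transpose_mult[OF Am_carrier Bm_carrier])
  then show ?thesis using part2_AB[OF n] by (simp add: Am_T Bm_T)
qed

lemma part1:
  fixes A B :: "'a::field mat"
  assumes A: "A \<in> carrier_mat (n+2) (n+2)" and B: "B \<in> carrier_mat (n+2) (n+2)"
    and AB: "A * B = 1\<^sub>m (n+2)" and BA: "B * A = 1\<^sub>m (n+2)"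
    and P: "\<forall>(i,j)\<in>P7 n. A $$ (i - 1, j - 1) = 0"
    and Q: "\<forall>(i,j)\<in>Q7 n. B $$ (i - 1, j - 1) = 0"
  shows "of_nat n = (0::'a)"
proof -
  have A00: "A $$ (0,0) = 0" using P by (auto simp: P7_def)
  have Aoff: "A $$ (k,j) = 0" if "1 \<le> k" "k < n+2" "1 \<le> j" "j < n+2" "k \<noteq> j" for k j
  proof -
    have "(k+1, j+1) \<in> P7 n" using that by (auto simp: P7_def Q7_def)
    then show ?thesis using P by fastforce
  qed
  have Bd: "B $$ (j,j) = 0" if "1 \<le> j" "j < n+2" for j
  proof -
    have "(j+1, j+1) \<in> Q7 n" using that by (auto simp: Q7_def)
    then show ?thesis using Q by fastforce
  qed
  have tm: "A $$ (0,j) * B $$ (j,0) = 1" if j: "1 \<le> j" "j < n+2" for j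
  proof -
    have "1 = (B * A) $$ (j,j)" using BA j by simp
    also have "\<dots> = (\<Sum>k\<in>{0..<Suc (Suc n)}. B $$ (j,k) * A $$ (k,j))"
      using A B j by (simp add: scalar_prod_def)
    also have "\<dots> = B $$ (j,0) * A $$ (0,j) + (\<Sum>k\<in>{1..<Suc (Suc n)}. B $$ (j,k) * A $$ (k,j))"
      by (rule sum_split0)
    also have "(\<Sum>k\<in>{1..<Suc (Suc n)}. B $$ (j,k) * A $$ (k,j)) = 0"
    proof (rule sum.neutral, intro ballI)
      fix k assume k: "k \<in> {1..<Suc (Suc n)}"
      show "B $$ (j,k) * A $$ (k,j) = 0"
      proof (cases "k = j")
        case True then show ?thesis using Bd j by simp
      next
        case False then show ?thesis using Aoff[of k j] j k by simp
      qed
    qed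
    finally show ?thesis by (simp add: mult.commute)
  qed
  have "1 = (A * B) $$ (0,0)" using AB by simp
  also have "\<dots> = (\<Sum>k\<in>{0..<Suc (Suc n)}. A $$ (0,k) * B $$ (k,0))"
    using A B by (simp add: scalar_prod_def)
  also have "\<dots> = A $$ (0,0) * B $$ (0,0) + (\<Sum>k\<in>{1..<Suc (Suc n)}. A $$ (0,k) * B $$ (k,0))"
    by (rule sum_split0)
  also have "(\<Sum>k\<in>{1..<Suc (Suc n)}. A $$ (0,k) * B $$ (k,0)) = (\<Sum>k\<in>{1..<Suc (Suc n)}. 1)"
    by (rule sum.cong) (auto intro: tm)
  finally have "1 = (of_nat (n+1) :: 'a)" using A00 by simp
  then show ?thesis by simp
qed

theorem mainTheorem7:
  fixes n :: nat
  assumes "n \<ge> 2"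
  shows "CI_solvable (P7 n) (Q7 n) (n + 2) TYPE('a::field) \<longleftrightarrow> of_nat n = (0::'a)"
proof
  assume "CI_solvable (P7 n) (Q7 n) (n + 2) TYPE('a::field)"
  then obtain A B :: "'a mat" where "A \<in> carrier_mat (n+2) (n+2)" "B \<in> carrier_mat (n+2) (n+2)"
    "A * B = 1\<^sub>m (n+2)" "B * A = 1\<^sub>m (n+2)"
    "\<forall>(i,j)\<in>P7 n. A $$ (i - 1, j - 1) = 0" "\<forall>(i,j)\<in>Q7 n. B $$ (i - 1, j - 1) = 0"
    unfolding CI_solvable_def by blast
  then show "of_nat n = (0::'a)" by (rule part1)
next
  assume n: "of_nat n = (0::'a)"
  have P: "\<forall>(i,j)\<in>P7 n. (Am (n+2) :: 'a mat) $$ (i - 1, j - 1) = 0"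
    by (auto simp: P7_def Q7_def Am_idx split: if_splits)
  have Q: "\<forall>(i,j)\<in>Q7 n. (Bm (n+2) :: 'a mat) $$ (i - 1, j - 1) = 0"
    by (auto simp: Q7_def Bm_idx)
  show "CI_solvable (P7 n) (Q7 n) (n + 2) TYPE('a::field)"
    unfolding CI_solvable_def
    using Am_carrier Bm_carrier part2_AB[OF n] part2_BA[OF n] P Q by blast
qed

end
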